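(* Let $n\ge1$ and let $G\subset GL(2n,\mathbb{R})$ be the subgroup of block matrices $E=\begin{pmatrix}S&O\\C&T\end{pmatrix}$ with $S,T\in GL(n,\mathbb{R})$, $C\in M(n,\mathbb{R})$, with the subspace topology. Let $X=G\times\mathbb{R}^n$ (product topology) with the quandle operation $(E_0,x_0)*(E_1,x_1)=(E_1E_0E_1^{-1},\ S_1x_0+(I-S_1)x_1)$, where $E_i=\begin{pmatrix}S_i&O\\C_i&T_i\end{pmatrix}$. Let $A=\mathbb{R}^n$ with $\eta_{(E_0,x_0),(E_1,x_1)}(a)=T_1a$ and $\tau_{(E_0,x_0),(E_1,x_1)}(a)=(I-T_1)a$. Then $(A,\eta,\tau)$ is a topological $X$-module and $H^2_{GC}(X,A)\neq0$; a nontrivial class is given by $\kappa_{(E_0,x_0),(E_1,x_1)}=C_1(x_0-x_1)$.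
   Context: For a topological quandle $X$, an $X$-module is a triple $(A,\eta,\tau)$ where $A$ is a topological abelian group, $\eta_{x,y}:A\to A$ ($x,y\in X$) are continuous group automorphisms and $\tau_{x,y}:A\to A$ continuous group endomorphisms with: $\eta_{x*y,z}\eta_{x,y}=\eta_{x*z,y*z}\eta_{x,z}$; $\eta_{x*y,z}\tau_{x,y}=\tau_{x*z,y*z}\eta_{y,z}$; $\tau_{x*y,z}=\eta_{x*z,y*z}\tau_{x,z}+\tau_{x*z,y*z}\tau_{y,z}$; $\tau_{x,x}+\eta_{x,x}=\mathrm{id}_A$. The second continuous generalized cohomology group is $H^2_{GC}(X,A)=Z^2/B^2$, where $Z^2$ is the group of continuous maps $\kappa:X\times X\to A$, $(x,y)\mapsto\kappa_{x,y}$, with $\kappa_{x,x}=0$ and $\eta_{x*y,z}\kappa_{x,y}+\kappa_{x*y,z}=\eta_{x*z,y*z}\kappa_{x,z}+\tau_{x*z,y*z}\kappa_{y,z}+\kappa_{x*z,y*z}$ for all $x,y,z$ (equivalently, $(x,a)*(y,b)=(x*y,\eta_{x,y}(a)+\tau_{x,y}(b)+\kappa_{x,y})$ is a quandle operation on $X\times A$), and $B^2$ consists of the maps $(x,y)\mapsto\eta_{x,y}(f(x))+\tau_{x,y}(f(y))-f(x*y)$ for continuous $f:X\to A$. *)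

theory Defs
  imports "HOL-Analysis.Analysis"
begin

definition quandle_on :: "'x set \<Rightarrow> ('x \<Rightarrow> 'x \<Rightarrow> 'x) \<Rightarrow> bool" where
  "quandle_on X op \<longleftrightarrow>
     (\<forall>x\<in>X. \<forall>y\<in>X. op x y \<in> X) \<and>
     (\<forall>x\<in>X. op x x = x) \<and>
     (\<forall>y\<in>X. bij_betw (\<lambda>x. op x y) X X) \<and>
     (\<forall>x\<in>X. \<forall>y\<in>X. \<forall>z\<in>X. op (op x y) z = op (op x z) (op y z))"

text \<open>Topological quandle: the operation is continuous and every right translation
  is a homeomorphism of X (X carries the subspace topology of the ambient type).\<close>
definition topological_quandle :: "'x::topological_space set \<Rightarrow> ('x \<Rightarrow> 'x \<Rightarrow> 'x) \<Rightarrow> bool" where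
  "topological_quandle X op \<longleftrightarrow>
     quandle_on X op \<and>
     continuous_on (X \<times> X) (\<lambda>(x, y). op x y) \<and>
     (\<forall>y\<in>X. \<exists>g. homeomorphism X X (\<lambda>x. op x y) g)"

definition group_endo :: "('a::ab_group_add \<Rightarrow> 'a) \<Rightarrow> bool" where
  "group_endo f \<longleftrightarrow> (\<forall>a b. f (a + b) = f a + f b)"

definition topological_X_module ::
  "'x set \<Rightarrow> ('x \<Rightarrow> 'x \<Rightarrow> 'x) \<Rightarrow> ('x \<Rightarrow> 'x \<Rightarrow> 'a::{ab_group_add,topological_space} \<Rightarrow> 'a)
     \<Rightarrow> ('x \<Rightarrow> 'x \<Rightarrow> 'a \<Rightarrow> 'a) \<Rightarrow> bool" where
  "topological_X_module X op eta tau \<longleftrightarrow>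
     (\<forall>x\<in>X. \<forall>y\<in>X.
        group_endo (eta x y) \<and> bij (eta x y) \<and> continuous_on UNIV (eta x y) \<and>
        group_endo (tau x y) \<and> continuous_on UNIV (tau x y)) \<and>
     (\<forall>x\<in>X. \<forall>y\<in>X. \<forall>z\<in>X.
        eta (op x y) z \<circ> eta x y = eta (op x z) (op y z) \<circ> eta x z) \<and>
     (\<forall>x\<in>X. \<forall>y\<in>X. \<forall>z\<in>X.
        eta (op x y) z \<circ> tau x y = tau (op x z) (op y z) \<circ> eta y z) \<and>
     (\<forall>x\<in>X. \<forall>y\<in>X. \<forall>z\<in>X. \<forall>a.
        tau (op x y) z a = eta (op x z) (op y z) (tau x z a) + tau (op x z) (op y z) (tau y z a)) \<and>
     (\<forall>x\<in>X. \<forall>a. tau x x a + eta x x a = a)"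

definition GC_cocycle ::
  "'x::topological_space set \<Rightarrow> ('x \<Rightarrow> 'x \<Rightarrow> 'x) \<Rightarrow> ('x \<Rightarrow> 'x \<Rightarrow> 'a::{ab_group_add,topological_space} \<Rightarrow> 'a)
     \<Rightarrow> ('x \<Rightarrow> 'x \<Rightarrow> 'a \<Rightarrow> 'a) \<Rightarrow> ('x \<Rightarrow> 'x \<Rightarrow> 'a) \<Rightarrow> bool" where
  "GC_cocycle X op eta tau \<kappa> \<longleftrightarrow>
     continuous_on (X \<times> X) (\<lambda>(x, y). \<kappa> x y) \<and>
     (\<forall>x\<in>X. \<kappa> x x = 0) \<and>
     (\<forall>x\<in>X. \<forall>y\<in>X. \<forall>z\<in>X.
        eta (op x y) z (\<kappa> x y) + \<kappa> (op x y) z =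
        eta (op x z) (op y z) (\<kappa> x z) + tau (op x z) (op y z) (\<kappa> y z) + \<kappa> (op x z) (op y z))"

text \<open>Membership in B^2_GC(X, A) (only values on X \<times> X matter).\<close>
definition GC_coboundary ::
  "'x::topological_space set \<Rightarrow> ('x \<Rightarrow> 'x \<Rightarrow> 'x) \<Rightarrow> ('x \<Rightarrow> 'x \<Rightarrow> 'a::{ab_group_add,topological_space} \<Rightarrow> 'a)
     \<Rightarrow> ('x \<Rightarrow> 'x \<Rightarrow> 'a \<Rightarrow> 'a) \<Rightarrow> ('x \<Rightarrow> 'x \<Rightarrow> 'a) \<Rightarrow> bool" where
  "GC_coboundary X op eta tau \<kappa> \<longleftrightarrow>
     (\<exists>f. continuous_on X f \<and>
        (\<forall>x\<in>X. \<forall>y\<in>X. \<kappa> x y = eta x y (f x) + tau x y (f y) - f (op x y)))"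

text \<open>2n x 2n real matrices are indexed by 'n + 'n; blocks S (upper left),
  upper right, C (lower left), T (lower right).\<close>
type_synonym 'n bigmat = "real ^ ('n + 'n) ^ ('n + 'n)"

definition blkS :: "('n::finite) bigmat \<Rightarrow> real ^ 'n ^ 'n" where
  "blkS E = (\<chi> i j. E $ Inl i $ Inl j)"
definition blkO :: "('n::finite) bigmat \<Rightarrow> real ^ 'n ^ 'n" where
  "blkO E = (\<chi> i j. E $ Inl i $ Inr j)"
definition blkC :: "('n::finite) bigmat \<Rightarrow> real ^ 'n ^ 'n" where
  "blkC E = (\<chi> i j. E $ Inr i $ Inl j)"
definition blkT :: "('n::finite) bigmat \<Rightarrow> real ^ 'n ^ 'n" where
  "blkT E = (\<chi> i j. E $ Inr i $ Inr j)"

definition Gblk :: "('n::finite) bigmat set" where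
  "Gblk = {E. blkO E = 0 \<and> invertible (blkS E) \<and> invertible (blkT E)}"

definition Xex :: "(('n::finite) bigmat \<times> (real ^ 'n)) set" where
  "Xex = Gblk \<times> UNIV"

definition qop :: "('n::finite) bigmat \<times> (real ^ 'n) \<Rightarrow> 'n bigmat \<times> (real ^ 'n) \<Rightarrow> 'n bigmat \<times> (real ^ 'n)" where
  "qop p q = (fst q ** fst p ** matrix_inv (fst q),
              blkS (fst q) *v snd p + (mat 1 - blkS (fst q)) *v snd q)"

definition eta_ex :: "('n::finite) bigmat \<times> (real ^ 'n) \<Rightarrow> 'n bigmat \<times> (real ^ 'n) \<Rightarrow> real ^ 'n \<Rightarrow> real ^ 'n" where
  "eta_ex p q a = blkT (fst q) *v a"

definition tau_ex :: "('n::finite) bigmat \<times> (real ^ 'n) \<Rightarrow> 'n bigmat \<times> (real ^ 'n) \<Rightarrow> real ^ 'n \<Rightarrow> real ^ 'n" where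
  "tau_ex p q a = (mat 1 - blkT (fst q)) *v a"

definition kappa_ex :: "('n::finite) bigmat \<times> (real ^ 'n) \<Rightarrow> 'n bigmat \<times> (real ^ 'n) \<Rightarrow> real ^ 'n" where
  "kappa_ex p q = blkC (fst q) *v (snd p - snd q)"

end

theory Submission
  imports Defs
begin

definition blk :: "real^'n^'n \<Rightarrow> real^'n^'n \<Rightarrow> real^'n^'n \<Rightarrow> ('n::finite) bigmat" where
 "blk S C T = (\<chi> i j. case i of Inl a \<Rightarrow> (case j of Inl b \<Rightarrow> S$a$b | Inr b \<Rightarrow> 0)
                              | Inr a \<Rightarrow> (case j of Inl b \<Rightarrow> C$a$b | Inr b \<Rightarrow> T$a$b))"

lemma blk_parts[simp]: "blkS (blk S C T) = S" "blkO (blk S C T) = 0" "blkC (blk S C T) = C" "blkT (blk S C T) = T"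
  by (simp_all add: blkS_def blkO_def blkC_def blkT_def blk_def vec_eq_iff)

lemma blk_eta: assumes "blkO E = 0" shows "blk (blkS E) (blkC E) (blkT E) = E"
proof -
  have "E $ Inl a $ Inr b = 0" for a b using assms unfolding blkO_def vec_eq_iff by auto
  then show ?thesis unfolding blk_def blkS_def blkC_def blkT_def vec_eq_iff
    by (auto split: sum.splits)
qed

lemma sum_UNIV_plus: "(\<Sum>k\<in>(UNIV::('a::finite+'b::finite) set). f k) = (\<Sum>a\<in>UNIV. f (Inl a)) + (\<Sum>b\<in>UNIV. f (Inr b))"
  using sum.Plus[of "UNIV::'a set" "UNIV::'b set" f] by (simp add: comp_def)

lemma blk_mult: "blk S1 C1 T1 ** blk S2 C2 T2 = blk (S1**S2) (C1**S2 + T1**C2) (T1**T2)"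
  unfolding matrix_matrix_mult_def blk_def vec_eq_iff
  by (auto simp: sum_UNIV_plus split: sum.splits)

lemma mat1_blk: "(mat 1 :: ('n::finite) bigmat) = blk (mat 1) 0 (mat 1)"
  unfolding mat_def blk_def vec_eq_iff by (auto split: sum.splits)


lemma matrix_inv_props:
  fixes A :: "real^'m^'m"
  assumes "invertible A" shows "A ** matrix_inv A = mat 1" "matrix_inv A ** A = mat 1"
proof -
  have "\<exists>A'. A ** A' = mat 1 \<and> A' ** A = mat 1" using assms unfolding invertible_def by blast
  then have "A ** matrix_inv A = mat 1 \<and> matrix_inv A ** A = mat 1"
    unfolding matrix_inv_def by (rule someI_ex)
  then show "A ** matrix_inv A = mat 1" "matrix_inv A ** A = mat 1" by auto
qed

lemma matrix_inv_unique:
  fixes A :: "real^'m^'m"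
  assumes "A ** B = mat 1" "B ** A = mat 1" shows "matrix_inv A = B"
proof -
  have inv: "invertible A" using assms unfolding invertible_def by blast
  have "matrix_inv A = matrix_inv A ** (A ** B)" using assms by simp
  also have "\<dots> = (matrix_inv A ** A) ** B" by (simp add: matrix_mul_assoc)
  also have "\<dots> = B" using matrix_inv_props[OF inv] by simp
  finally show ?thesis .
qed

lemma matrix_inv_invertible:
  fixes A :: "real^'m^'m"
  assumes "invertible A" shows "invertible (matrix_inv A)"
  using matrix_inv_props[OF assms] unfolding invertible_def by blast

lemma cancel_l: fixes A :: "real^'m^'m" assumes "invertible A"
  shows "matrix_inv A ** (A ** B) = B" "A ** (matrix_inv A ** B) = B"
        "matrix_inv A *v (A *v v) = v" "A *v (matrix_inv A *v v) = v"
  using matrix_inv_props[OF assms]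
  by (simp_all add: matrix_mul_assoc matrix_vector_mul_assoc)

lemma continuous_on_mmult[continuous_intros]:
  fixes f :: "'x::topological_space \<Rightarrow> real^'n^'m" and g :: "'x \<Rightarrow> real^'p^'n"
  assumes "continuous_on S f" "continuous_on S g"
  shows "continuous_on S (\<lambda>x. f x ** g x)"
  unfolding matrix_matrix_mult_def by (intro continuous_intros assms)

lemma continuous_on_mvmult[continuous_intros]:
  fixes f :: "'x::topological_space \<Rightarrow> real^'n^'m" and g :: "'x \<Rightarrow> real^'n"
  assumes "continuous_on S f" "continuous_on S g"
  shows "continuous_on S (\<lambda>x. f x *v g x)"
  unfolding matrix_vector_mult_def by (intro continuous_intros assms)

lemma continuous_on_det[continuous_intros]:
  fixes f :: "'x::topological_space \<Rightarrow> real^'n^'n"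
  assumes "continuous_on S f"
  shows "continuous_on S (\<lambda>x. det (f x))"
  unfolding det_def by (intro continuous_intros assms)

lemma matrix_inv_cramer:
  fixes A :: "real^'m^'m"
  assumes "invertible A"
  shows "matrix_inv A = (\<chi> k j. det (\<chi> i l. if l = k then (if i = j then 1 else 0) else A$i$l) / det A)"
proof -
  have d0: "det A \<noteq> 0" using assms invertible_det_nz by blast
  have "matrix_inv A $ k $ j = det (\<chi> i l. if l = k then (if i = j then 1 else 0) else A$i$l) / det A" for k j
  proof -
    define e :: "real^'m" where "e = (\<chi> i. if i = j then 1 else 0)"
    have "A *v (matrix_inv A *v e) = e" using cancel_l[OF assms] by simp
    then have "matrix_inv A *v e = (\<chi> k. det(\<chi> i l. if l=k then e$i else A$i$l) / det A)"
      using cramer[OF d0] by blast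
    moreover have "(matrix_inv A *v e) $ k = matrix_inv A $ k $ j"
      unfolding e_def matrix_vector_mult_def by (simp add: if_distrib cong: if_cong)
    moreover have "(\<chi> i l. if l=k then e$i else A$i$l) = (\<chi> i l. if l = k then (if i = j then 1 else 0) else A$i$l)"
      by (simp add: e_def vec_eq_iff)
    ultimately show ?thesis by (simp add: vec_eq_iff)
  qed
  then show ?thesis by (simp add: vec_eq_iff)
qed

lemma continuous_on_matrix_inv:
  "continuous_on {A :: real^'m^'m. invertible A} matrix_inv"
proof -
  have "continuous_on {A :: real^'m^'m. invertible A}
     (\<lambda>A. (\<chi> k j. det (\<chi> i l. if l = k then (if i = j then 1 else 0) else A$i$l) / det A))"
    apply (intro continuous_intros)
    apply (rename_tac k j i l)
    apply (case_tac "l = k")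
    apply (auto intro!: continuous_intros simp: invertible_det_nz)
    done
  then show ?thesis by (rule continuous_on_eq) (simp add: matrix_inv_cramer)
qed


lemma mm_neg1: "(A::real^'n^'m) ** (- B) = - (A ** B)"
  by (simp_all add: matrix_matrix_mult_def vec_eq_iff sum_negf)
lemma mm_neg2: "(- (A::real^'n^'m)) ** B = - (A ** B)"
  by (simp_all add: matrix_matrix_mult_def vec_eq_iff sum_negf)
lemmas mm_neg = mm_neg1 mm_neg2
lemma mm_rdistrib: "((A::real^'n^'m) + B) ** C = A ** C + B ** C"
  by (simp add: matrix_matrix_mult_def vec_eq_iff sum.distrib distrib_right)
lemma mm_diff1: "(A::real^'n^'m) ** (B - C) = A ** B - A ** C"
  by (simp_all add: matrix_matrix_mult_def vec_eq_iff sum_subtractf left_diff_distrib right_diff_distrib)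
lemma mm_diff2: "((A::real^'n^'m) - B) ** C = A ** C - B ** C"
  by (simp_all add: matrix_matrix_mult_def vec_eq_iff sum_subtractf left_diff_distrib right_diff_distrib)

lemma invertible_mat1: "invertible (mat 1 :: real^'m^'m)" unfolding invertible_def by (rule exI[of _ "mat 1"]) simp

lemma Gblk_blk: "invertible S \<Longrightarrow> invertible T \<Longrightarrow> blk S C T \<in> Gblk"
  unfolding Gblk_def by simp

lemma mat1_Gblk: "(mat 1 :: ('n::finite) bigmat) \<in> Gblk"
proof -
  have "blk (mat 1) 0 (mat 1) \<in> Gblk" by (rule Gblk_blk) (rule invertible_mat1)+
  then show ?thesis by (simp only: mat1_blk[symmetric])
qed


lemma Gblk_prod:
  assumes "E \<in> Gblk" "F \<in> Gblk"
  shows "E ** F \<in> Gblk" "blkS (E ** F) = blkS E ** blkS F"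
    "blkC (E ** F) = blkC E ** blkS F + blkT E ** blkC F" "blkT (E ** F) = blkT E ** blkT F"
proof -
  have e: "E ** F = blk (blkS E ** blkS F) (blkC E ** blkS F + blkT E ** blkC F) (blkT E ** blkT F)"
  proof -
    have "blkO E = 0" "blkO F = 0" using assms unfolding Gblk_def by auto
    then have "E ** F = blk (blkS E) (blkC E) (blkT E) ** blk (blkS F) (blkC F) (blkT F)"
      by (simp only: blk_eta)
    then show ?thesis by (simp only: blk_mult)
  qed
  then show "blkS (E ** F) = blkS E ** blkS F"
    "blkC (E ** F) = blkC E ** blkS F + blkT E ** blkC F" "blkT (E ** F) = blkT E ** blkT F" by simp_all
  show "E ** F \<in> Gblk" unfolding e using assms by (intro Gblk_blk) (auto simp: Gblk_def invertible_mult)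
qed

definition Binv :: "('n::finite) bigmat \<Rightarrow> 'n bigmat" where
  "Binv E = blk (matrix_inv (blkS E)) (- (matrix_inv (blkT E) ** blkC E ** matrix_inv (blkS E))) (matrix_inv (blkT E))"

lemma Gblk_B:
  assumes "E \<in> Gblk"
  shows "E ** Binv E = mat 1" "Binv E ** E = mat 1"
proof -
  let ?B = "Binv E"
  have S: "invertible (blkS E)" and T: "invertible (blkT E)" and O: "blkO E = 0" using assms by (auto simp: Gblk_def)
  note pS = matrix_inv_props[OF S] and pT = matrix_inv_props[OF T]
  have E': "blk (blkS E) (blkC E) (blkT E) = E" using blk_eta[OF O] by simp
  let ?S = "blkS E" and ?T = "blkT E" and ?C = "blkC E"
  have 1: "blk ?S ?C ?T ** ?B = blk (?S ** matrix_inv ?S) (?C ** matrix_inv ?S + ?T ** - (matrix_inv ?T ** ?C ** matrix_inv ?S)) (?T ** matrix_inv ?T)"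
    unfolding Binv_def by (simp only: blk_mult)
  have 2: "?C ** matrix_inv ?S + ?T ** - (matrix_inv ?T ** ?C ** matrix_inv ?S) = 0"
    by (simp only: mm_neg matrix_mul_assoc pT matrix_mul_lid) simp
  have "E ** ?B = blk ?S ?C ?T ** ?B" by (subst E') (rule refl)
  also have "\<dots> = blk (?S ** matrix_inv ?S) 0 (?T ** matrix_inv ?T)" by (simp only: 1 2)
  finally show "E ** ?B = mat 1" by (simp only: pS pT mat1_blk[symmetric])
  have 3: "?B ** blk ?S ?C ?T = blk (matrix_inv ?S ** ?S) (- (matrix_inv ?T ** ?C ** matrix_inv ?S) ** ?S + matrix_inv ?T ** ?C) (matrix_inv ?T ** ?T)"
    unfolding Binv_def by (simp only: blk_mult)
  have 4: "- (matrix_inv ?T ** ?C ** matrix_inv ?S) ** ?S + matrix_inv ?T ** ?C = 0"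
    by (simp only: mm_neg matrix_mul_assoc[symmetric] pS matrix_mul_rid) simp
  have "?B ** E = ?B ** blk ?S ?C ?T" by (subst E') (rule refl)
  also have "\<dots> = blk (matrix_inv ?S ** ?S) 0 (matrix_inv ?T ** ?T)" by (simp only: 3 4)
  finally show "?B ** E = mat 1" by (simp only: pS pT mat1_blk[symmetric])
qed

lemma Gblk_inv:
  assumes "E \<in> Gblk"
  shows "invertible E" "matrix_inv E \<in> Gblk" "E ** matrix_inv E = mat 1" "matrix_inv E ** E = mat 1"
    "blkS (matrix_inv E) = matrix_inv (blkS E)" "blkT (matrix_inv E) = matrix_inv (blkT E)"
    "blkC (matrix_inv E) = - (matrix_inv (blkT E) ** blkC E ** matrix_inv (blkS E))"
proof -
  have eq: "matrix_inv E = Binv E" using Gblk_B[OF assms] by (rule matrix_inv_unique)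
  show "invertible E" using Gblk_B[OF assms] unfolding invertible_def by blast
  then show "E ** matrix_inv E = mat 1" "matrix_inv E ** E = mat 1" by (rule matrix_inv_props)+
  show "blkS (matrix_inv E) = matrix_inv (blkS E)" "blkT (matrix_inv E) = matrix_inv (blkT E)"
    "blkC (matrix_inv E) = - (matrix_inv (blkT E) ** blkC E ** matrix_inv (blkS E))"
    unfolding eq Binv_def by simp_all
  show "matrix_inv E \<in> Gblk" unfolding eq Binv_def using assms
    by (intro Gblk_blk) (auto simp: Gblk_def matrix_inv_invertible)
qed

lemma conj_blocks:
  assumes "E \<in> Gblk" "F \<in> Gblk"
  shows "F ** E ** matrix_inv F \<in> Gblk"
    "blkS (F ** E ** matrix_inv F) = blkS F ** blkS E ** matrix_inv (blkS F)"
    "blkT (F ** E ** matrix_inv F) = blkT F ** blkT E ** matrix_inv (blkT F)"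
    "blkC (F ** E ** matrix_inv F) = (blkC F ** blkS E + blkT F ** blkC E) ** matrix_inv (blkS F)
        + (blkT F ** blkT E) ** - (matrix_inv (blkT F) ** blkC F ** matrix_inv (blkS F))"
proof -
  have FE: "F ** E \<in> Gblk" using Gblk_prod[OF assms(2,1)] by simp
  note I = Gblk_inv[OF assms(2)]
  show "F ** E ** matrix_inv F \<in> Gblk" using Gblk_prod[OF FE I(2)] by simp
  show "blkS (F ** E ** matrix_inv F) = blkS F ** blkS E ** matrix_inv (blkS F)"
    "blkT (F ** E ** matrix_inv F) = blkT F ** blkT E ** matrix_inv (blkT F)"
    "blkC (F ** E ** matrix_inv F) = (blkC F ** blkS E + blkT F ** blkC E) ** matrix_inv (blkS F)
        + (blkT F ** blkT E) ** - (matrix_inv (blkT F) ** blkC F ** matrix_inv (blkS F))"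
    using Gblk_prod[OF FE I(2)] Gblk_prod[OF assms(2,1)] I by simp_all
qed

lemma Gblk_invS: "E \<in> Gblk \<Longrightarrow> invertible (blkS E)" and Gblk_invT: "E \<in> Gblk \<Longrightarrow> invertible (blkT E)"
  by (auto simp: Gblk_def)

lemma mv_neg1: "(- (A::real^'n^'m)) *v x = - (A *v x)"
  by (simp add: matrix_vector_mult_def vec_eq_iff sum_negf)
lemma mv_neg2: "(A::real^'n^'m) *v (- x) = - (A *v x)"
  by (simp add: matrix_vector_mult_def vec_eq_iff sum_negf)

lemmas vs = matrix_vector_mul_assoc[symmetric] matrix_vector_mult_diff_rdistrib matrix_vector_mult_add_rdistrib
  matrix_vector_right_distrib matrix_vector_mult_diff_distrib matrix_vector_mul_lid mv_neg1 mv_neg2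

lemma continuous_on_blk[continuous_intros]:
  fixes f :: "'x::topological_space \<Rightarrow> ('n::finite) bigmat"
  assumes "continuous_on S f"
  shows "continuous_on S (\<lambda>x. blkS (f x))" "continuous_on S (\<lambda>x. blkT (f x))" "continuous_on S (\<lambda>x. blkC (f x))"
  unfolding blkS_def blkT_def blkC_def by (intro continuous_intros assms)+


lemma Xex_iff: "p \<in> Xex \<longleftrightarrow> fst p \<in> Gblk" by (cases p) (simp add: Xex_def)

lemma qop_in: "p \<in> Xex \<Longrightarrow> q \<in> Xex \<Longrightarrow> qop p q \<in> Xex"
  by (simp add: Xex_iff qop_def conj_blocks)

definition ginv :: "('n::finite) bigmat \<times> (real ^ 'n) \<Rightarrow> 'n bigmat \<times> (real ^ 'n) \<Rightarrow> 'n bigmat \<times> (real ^ 'n)" where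
  "ginv q p = (matrix_inv (fst q) ** fst p ** fst q,
               matrix_inv (blkS (fst q)) *v (snd p - (mat 1 - blkS (fst q)) *v snd q))"

lemma hom_right:
  fixes q :: "('n::finite) bigmat \<times> (real^'n)"
  assumes q: "q \<in> Xex"
  shows "homeomorphism Xex Xex (\<lambda>p. qop p q) (ginv q)"
proof (rule homeomorphismI)
  obtain F y where qq: "q = (F, y)" by (cases q)
  have F: "F \<in> Gblk" using q qq by (simp add: Xex_iff)
  note I = Gblk_inv[OF F] and iS = Gblk_invS[OF F]
  show "continuous_on Xex (\<lambda>p. qop p q)" unfolding qop_def by (intro continuous_intros)
  show "continuous_on Xex (ginv q)" unfolding ginv_def by (intro continuous_intros)
  show "(\<lambda>p. qop p q) ` Xex \<subseteq> Xex" using qop_in q by blast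
  show "ginv q ` Xex \<subseteq> Xex"
  proof
    fix z :: "'n bigmat \<times> (real^'n)" assume "z \<in> ginv q ` Xex"
    then obtain p where p: "p \<in> Xex" "z = ginv q p" by auto
    have "matrix_inv F ** fst p \<in> Gblk" using Gblk_prod I p by (simp add: Xex_iff)
    then have "matrix_inv F ** fst p ** F \<in> Gblk" by (rule Gblk_prod(1)[OF _ F])
    then show "z \<in> Xex" using p qq by (simp add: ginv_def Xex_iff)
  qed
  fix p :: "'n bigmat \<times> (real^'n)" assume "p \<in> Xex"
  show "ginv q (qop p q) = p"
    using I qq cancel_l[OF iS] cancel_l[OF I(1)]
    by (simp add: ginv_def qop_def matrix_mul_assoc[symmetric] vs prod_eq_iff)
  show "qop (ginv q p) q = p"
    using I qq cancel_l[OF iS] cancel_l[OF I(1)]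
    by (simp add: ginv_def qop_def matrix_mul_assoc[symmetric] vs prod_eq_iff)
qed

lemma part_quandle: "topological_quandle (Xex :: ('n::finite bigmat \<times> (real ^ 'n)) set) qop"
proof -
  have cl: "\<forall>x\<in>Xex. \<forall>y\<in>Xex. qop x y \<in> (Xex :: ('n::finite bigmat \<times> (real ^ 'n)) set)" using qop_in by blast
  have idem: "\<forall>x\<in>(Xex :: ('n::finite bigmat \<times> (real ^ 'n)) set). qop x x = x"
  proof
    fix x :: "'n bigmat \<times> (real ^ 'n)" assume x: "x \<in> Xex"
    note I = Gblk_inv[of "fst x"]
    show "qop x x = x" using x I
      by (simp add: Xex_iff qop_def matrix_mul_assoc[symmetric] vs prod_eq_iff)
  qed
  have hom: "\<forall>y\<in>(Xex :: ('n::finite bigmat \<times> (real ^ 'n)) set). \<exists>g. homeomorphism Xex Xex (\<lambda>x. qop x y) g"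
    using hom_right by blast
  have bij: "\<forall>y\<in>(Xex :: ('n::finite bigmat \<times> (real ^ 'n)) set). bij_betw (\<lambda>x. qop x y) Xex Xex"
  proof
    fix y :: "'n bigmat \<times> (real ^ 'n)" assume "y \<in> Xex"
    then have h: "homeomorphism Xex Xex (\<lambda>x. qop x y) (ginv y)" by (rule hom_right)
    show "bij_betw (\<lambda>x. qop x y) Xex Xex"
      unfolding bij_betw_def using h unfolding homeomorphism_def by (metis inj_on_inverseI)
  qed
  have dist: "\<forall>x\<in>(Xex :: ('n::finite bigmat \<times> (real ^ 'n)) set). \<forall>y\<in>Xex. \<forall>z\<in>Xex. qop (qop x y) z = qop (qop x z) (qop y z)"
  proof (intro ballI)
    fix x y z :: "'n bigmat \<times> (real ^ 'n)" assume xyz: "x \<in> Xex" "y \<in> Xex" "z \<in> Xex"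
    obtain E0 a0 where x: "x = (E0, a0)" by (cases x)
    obtain E1 a1 where y: "y = (E1, a1)" by (cases y)
    obtain E2 a2 where z: "z = (E2, a2)" by (cases z)
    have G: "E0 \<in> Gblk" "E1 \<in> Gblk" "E2 \<in> Gblk" using xyz x y z by (auto simp: Xex_iff)
    have i1: "invertible E1" and i2: "invertible E2" using G Gblk_inv by auto
    have iS2: "invertible (blkS E2)" using G Gblk_invS by auto
    have mi: "matrix_inv (E2 ** E1 ** matrix_inv E2) = E2 ** matrix_inv E1 ** matrix_inv E2"
      by (rule matrix_inv_unique) (simp_all add: matrix_mul_assoc[symmetric] cancel_l i1 i2 matrix_inv_props[OF i2])
    have bS: "blkS (E2 ** E1 ** matrix_inv E2) = blkS E2 ** blkS E1 ** matrix_inv (blkS E2)"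
      using conj_blocks[OF G(2,3)] by simp
    show "qop (qop x y) z = qop (qop x z) (qop y z)"
      unfolding x y z qop_def prod_eq_iff fst_conv snd_conv mi bS
      by (simp add: matrix_mul_assoc[symmetric] cancel_l[OF i2] cancel_l[OF iS2] vs algebra_simps)
  qed
  have cont: "continuous_on ((Xex :: ('n::finite bigmat \<times> (real ^ 'n)) set) \<times> Xex) (\<lambda>(x, y). qop x y)"
  proof -
    have e: "(\<lambda>(x, y). qop x y) = (\<lambda>w::('n bigmat \<times> (real^'n)) \<times> ('n bigmat \<times> (real^'n)). qop (fst w) (snd w))" by auto
    have ci: "continuous_on ((Xex :: ('n::finite bigmat \<times> (real ^ 'n)) set) \<times> Xex) (\<lambda>w. matrix_inv (fst (snd w)))"
      by (rule continuous_on_compose2[OF continuous_on_matrix_inv, of _ "\<lambda>w. fst (snd w)"])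
         (auto intro!: continuous_intros simp: Xex_def Gblk_inv)
    have "continuous_on ((Xex :: ('n::finite bigmat \<times> (real ^ 'n)) set) \<times> Xex) (\<lambda>w. qop (fst w) (snd w))"
      unfolding qop_def by (intro continuous_intros ci)
    then show ?thesis by (simp only: e)
  qed
  show ?thesis unfolding topological_quandle_def quandle_on_def using cl idem hom bij dist cont by blast
qed


lemma bij_mv: assumes "invertible (A::real^'n^'n)" shows "bij (\<lambda>a. A *v a)"
  by (rule bij_betw_byWitness[where f'="\<lambda>a. matrix_inv A *v a"]) (auto simp: cancel_l[OF assms])

lemma part_module: "topological_X_module (Xex :: ('n::finite bigmat \<times> (real ^ 'n)) set) qop eta_ex tau_ex"
  unfolding topological_X_module_def
proof (intro conjI ballI allI)
  fix x y :: "'n bigmat \<times> (real ^ 'n)" assume xy: "x \<in> Xex" "y \<in> Xex"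
  have iT: "invertible (blkT (fst y))" using xy Gblk_invT by (auto simp: Xex_iff)
  show "group_endo (eta_ex x y)" "group_endo (tau_ex x y)"
    by (simp_all add: group_endo_def eta_ex_def tau_ex_def vs)
  show "bij (eta_ex x y)" unfolding eta_ex_def using bij_mv[OF iT] by simp
  show "continuous_on UNIV (eta_ex x y)" "continuous_on UNIV (tau_ex x y)"
    unfolding eta_ex_def tau_ex_def by (intro continuous_intros)+
next
  fix x :: "'n bigmat \<times> (real ^ 'n)" and a assume "x \<in> Xex"
  show "tau_ex x x a + eta_ex x x a = a" by (simp add: eta_ex_def tau_ex_def vs)
next
  fix x y z :: "'n bigmat \<times> (real ^ 'n)" assume xyz: "x \<in> Xex" "y \<in> Xex" "z \<in> Xex"
  have G: "fst y \<in> Gblk" "fst z \<in> Gblk" using xyz by (auto simp: Xex_iff)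
  have iT: "invertible (blkT (fst z))" using G Gblk_invT by auto
  have bT: "blkT (fst (qop y z)) = blkT (fst z) ** blkT (fst y) ** matrix_inv (blkT (fst z))"
    using conj_blocks[OF G] by (simp add: qop_def)
  show "eta_ex (qop x y) z \<circ> eta_ex x y = eta_ex (qop x z) (qop y z) \<circ> eta_ex x z"
    by (rule ext) (simp add: eta_ex_def bT vs cancel_l[OF iT])
  show "eta_ex (qop x y) z \<circ> tau_ex x y = tau_ex (qop x z) (qop y z) \<circ> eta_ex y z"
    by (rule ext) (simp add: eta_ex_def tau_ex_def bT vs cancel_l[OF iT])
  fix a
  show "tau_ex (qop x y) z a = eta_ex (qop x z) (qop y z) (tau_ex x z a) + tau_ex (qop x z) (qop y z) (tau_ex y z a)"
    by (simp add: eta_ex_def tau_ex_def bT vs cancel_l[OF iT])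
qed

lemma part_cocycle: "GC_cocycle (Xex :: ('n::finite bigmat \<times> (real ^ 'n)) set) qop eta_ex tau_ex kappa_ex"
  unfolding GC_cocycle_def
proof (intro conjI ballI)
  have e: "(\<lambda>(x, y). kappa_ex x y) = (\<lambda>w::('n bigmat \<times> (real^'n)) \<times> ('n bigmat \<times> (real^'n)). kappa_ex (fst w) (snd w))" by auto
  have "continuous_on ((Xex :: ('n::finite bigmat \<times> (real ^ 'n)) set) \<times> Xex) (\<lambda>w. kappa_ex (fst w) (snd w))"
    unfolding kappa_ex_def by (intro continuous_intros)
  then show "continuous_on ((Xex :: ('n::finite bigmat \<times> (real ^ 'n)) set) \<times> Xex) (\<lambda>(x, y). kappa_ex x y)" by (simp only: e)
next
  fix x :: "'n bigmat \<times> (real ^ 'n)" assume "x \<in> Xex"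
  show "kappa_ex x x = 0" by (simp add: kappa_ex_def)
next
  fix x y z :: "'n bigmat \<times> (real ^ 'n)" assume xyz: "x \<in> Xex" "y \<in> Xex" "z \<in> Xex"
  obtain E0 a0 where x: "x = (E0, a0)" by (cases x)
  obtain E1 a1 where y: "y = (E1, a1)" by (cases y)
  obtain E2 a2 where z: "z = (E2, a2)" by (cases z)
  have G: "E0 \<in> Gblk" "E1 \<in> Gblk" "E2 \<in> Gblk" using xyz x y z by (auto simp: Xex_iff)
  have iS: "invertible (blkS E2)" and iT: "invertible (blkT E2)" using G Gblk_invS Gblk_invT by auto
  note cb = conj_blocks[OF G(2,3)]
  show "eta_ex (qop x y) z (kappa_ex x y) + kappa_ex (qop x y) z =
        eta_ex (qop x z) (qop y z) (kappa_ex x z) + tau_ex (qop x z) (qop y z) (kappa_ex y z) + kappa_ex (qop x z) (qop y z)"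
    unfolding x y z eta_ex_def tau_ex_def kappa_ex_def qop_def fst_conv snd_conv cb(2,3,4)
    by (simp add: vs mm_rdistrib cancel_l[OF iS] cancel_l[OF iT] algebra_simps)
qed

lemma part_noncob: "\<not> GC_coboundary (Xex :: ('n::finite bigmat \<times> (real ^ 'n)) set) qop eta_ex tau_ex kappa_ex"
proof
  assume "GC_coboundary (Xex :: ('n::finite bigmat \<times> (real ^ 'n)) set) qop eta_ex tau_ex kappa_ex"
  then obtain f where H: "\<forall>x\<in>(Xex :: ('n::finite bigmat \<times> (real ^ 'n)) set). \<forall>y\<in>Xex. kappa_ex x y = eta_ex x y (f x) + tau_ex x y (f y) - f (qop x y)"
    unfolding GC_coboundary_def by blast
  define E1 :: "'n bigmat" where "E1 = blk (mat 1) (mat 1) (mat 1)"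
  define v :: "real^'n" where "v = (\<chi> i. 1)"
  have G1: "E1 \<in> Gblk" unfolding E1_def by (intro Gblk_blk invertible_mat1)
  have x: "(mat 1, v) \<in> (Xex :: ('n::finite bigmat \<times> (real ^ 'n)) set)" using mat1_Gblk by (simp add: Xex_iff)
  have y: "(E1, 0) \<in> (Xex :: ('n::finite bigmat \<times> (real ^ 'n)) set)" using G1 by (simp add: Xex_iff)
  have q: "qop (mat 1, v) (E1, 0) = (mat 1, v)"
    using Gblk_inv(3)[OF G1] by (simp add: qop_def E1_def)
  have "kappa_ex (mat 1, v) (E1, 0) = eta_ex (mat 1, v) (E1, 0) (f (mat 1, v)) + tau_ex (mat 1, v) (E1, 0) (f (E1, 0)) - f (qop (mat 1, v) (E1, 0))"
    using H x y by blast
  moreover have "blkS E1 = mat 1" "blkC E1 = mat 1" "blkT E1 = mat 1" by (simp_all add: E1_def)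
  ultimately have "v = 0" by (simp add: q kappa_ex_def eta_ex_def tau_ex_def)
  then show False unfolding v_def by (simp add: vec_eq_iff)
qed

theorem mainTheorem7:
  shows "topological_quandle (Xex :: ('n::finite bigmat \<times> (real ^ 'n)) set) qop \<and>
         topological_X_module (Xex :: ('n bigmat \<times> (real ^ 'n)) set) qop eta_ex tau_ex \<and>
         GC_cocycle (Xex :: ('n bigmat \<times> (real ^ 'n)) set) qop eta_ex tau_ex kappa_ex \<and>
         \<not> GC_coboundary (Xex :: ('n bigmat \<times> (real ^ 'n)) set) qop eta_ex tau_ex kappa_ex"
  using part_quandle part_module part_cocycle part_noncob by blast

end
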